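(* Let $(X,\tau)$ be a fuzzifying topological space such that $\tau_P(A\cap B)\ge\min(\tau_P(A),\tau_P(B))$ for all $A,B\subseteq X$. Then $$\vDash T_2^P(X,\tau)\otimes(L_PC(X,\tau))^2\to\forall x\forall U\big(U\in N^{P}_x\to\exists V(V\in N^{P}_x\wedge Cl_P(V)\subseteq U\wedge\Gamma_P(V))\big),$$ that is, for all $x\in X$ and $U\subseteq X$, $$\max\big(0,T_2^P(X,\tau)+2L_PC(X,\tau)-2\big)\le\min\Big(1,\ 1-N^P_x(U)+\sup_{V\subseteq X}\min\big(N^P_x(V),\ \inf_{y\in X\setminus U}N^P_y(X\setminus V),\ \Gamma_P(V)\big)\Big).$$
   Context: Łukasiewicz semantics: $[\varphi\otimes\psi]=\max(0,[\varphi]+[\psi]-1)$, $[\varphi\to\psi]=\min(1,1-[\varphi]+[\psi])$, $[\wedge]=\min$, $[\forall]=\inf$, $[\exists]=\sup$, $\vDash$ means value $1$; $(L_PC)^2=L_PC\otimes L_PC$; $[Cl_P(V)\subseteq U]=\inf_{y\notin U}(1-Cl_P(V)(y))$. A fuzzifying topology on $X$ is $\tau:P(X)\to[0,1]$ with $\tau(X)=1$, $\tau(A\cap B)\ge\min(\tau(A),\tau(B))$, $\tau(\bigcup A_\lambda)\ge\inf\tau(A_\lambda)$. $N_x(A)=\sup_{x\in B\subseteq A}\tau(B)$; $Cl(A)(x)=1-N_x(X\setminus A)$; for $\mu:X\to[0,1]$, $Int(\mu)(x)=\sup_{x\in B}\min(\tau(B),\inf_{y\in B}\mu(y))$. Pre-open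 degrees $\tau_P(A)=\inf_{x\in A}Int(Cl(A))(x)$; $N^P_x(A)=\sup_{x\in B\subseteq A}\tau_P(B)$; $Cl_P(A)(x)=1-N^P_x(X\setminus A)$. $T_2^P(X,\tau)=\inf_{x\ne y}\sup\{\min(N^P_x(B),N^P_y(C)):B\cap C=\emptyset\}$. For $G\subseteq X$: $(\tau_P/G)(B)=\sup\{\tau_P(V):V\cap G=B\}$; compactness degree of $G$ w.r.t. $\rho:P(G)\to[0,1]$: with $K(\Re,G)=\inf_{x\in G}\sup_{B\ni x}\Re(B)$, $[\Re\subseteq\rho]=\inf_B\min(1,1-\Re(B)+\rho(B))$, $\wp\le\Re$ pointwise, $FF(\wp)=1-\inf\{\delta\in[0,1]:\{B:\wp(B)>\delta\}\text{ finite}\}$, $\Gamma(G,\rho)=\inf_{\Re}\min\big(1,1-\max(0,K(\Re,G)+[\Re\subseteq\rho]-1)+\sup_{\wp\le\Re}\max(0,K(\wp,G)+FF(\wp)-1)\big)$; $\Gamma_P(G)=\Gamma(G,\tau_P/G)$. $L_PC(X,\tau)=\inf_{x\in X}\sup_{B\subseteq X}\max(0,N^P_x(B)+\Gamma_P(B)-1)$. *)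

theory Defs
  imports Complex_Main
begin

text \<open>The space X is the universe of the type 'a. Infima/suprema are taken in [0,1]:
  the infimum of the empty set is 1, the supremum of the empty set is 0.\<close>

definition infI :: "real set \<Rightarrow> real" where
  "infI S = (if S = {} then 1 else Inf S)"

definition supI :: "real set \<Rightarrow> real" where
  "supI S = (if S = {} then 0 else Sup S)"

definition fuzzifying_topology :: "('a set \<Rightarrow> real) \<Rightarrow> bool" where
  "fuzzifying_topology \<tau> \<longleftrightarrow>
     (\<forall>A. 0 \<le> \<tau> A \<and> \<tau> A \<le> 1) \<and>
     \<tau> UNIV = 1 \<and>
     (\<forall>A B. \<tau> (A \<inter> B) \<ge> min (\<tau> A) (\<tau> B)) \<and>
     (\<forall>\<A>. \<tau> (\<Union>\<A>) \<ge> infI (\<tau> ` \<A>))"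

definition nbhd :: "('a set \<Rightarrow> real) \<Rightarrow> 'a \<Rightarrow> 'a set \<Rightarrow> real" where
  "nbhd \<tau> x A = supI {\<tau> B | B. x \<in> B \<and> B \<subseteq> A}"

definition clos :: "('a set \<Rightarrow> real) \<Rightarrow> 'a set \<Rightarrow> 'a \<Rightarrow> real" where
  "clos \<tau> A x = 1 - nbhd \<tau> x (- A)"

definition interior_fz :: "('a set \<Rightarrow> real) \<Rightarrow> ('a \<Rightarrow> real) \<Rightarrow> 'a \<Rightarrow> real" where
  "interior_fz \<tau> \<mu> x = supI {min (\<tau> B) (infI (\<mu> ` B)) | B. x \<in> B}"

definition preopen :: "('a set \<Rightarrow> real) \<Rightarrow> 'a set \<Rightarrow> real" where
  "preopen \<tau> A = infI ((\<lambda>x. interior_fz \<tau> (clos \<tau> A) x) ` A)"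

definition pnbhd :: "('a set \<Rightarrow> real) \<Rightarrow> 'a \<Rightarrow> 'a set \<Rightarrow> real" where
  "pnbhd \<tau> x A = supI {preopen \<tau> B | B. x \<in> B \<and> B \<subseteq> A}"

definition pclos :: "('a set \<Rightarrow> real) \<Rightarrow> 'a set \<Rightarrow> 'a \<Rightarrow> real" where
  "pclos \<tau> A x = 1 - pnbhd \<tau> x (- A)"

definition T2P :: "('a set \<Rightarrow> real) \<Rightarrow> real" where
  "T2P \<tau> = infI {supI {min (pnbhd \<tau> x B) (pnbhd \<tau> y C) | B C. B \<inter> C = {}} | x y. x \<noteq> y}"

definition preopen_rel :: "('a set \<Rightarrow> real) \<Rightarrow> 'a set \<Rightarrow> 'a set \<Rightarrow> real" where
  "preopen_rel \<tau> G B = supI {preopen \<tau> V | V. V \<inter> G = B}"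

text \<open>Fuzzy families of subsets of G: maps P(G) \<rightarrow> [0,1] (values outside P(G) are ignored).\<close>
definition fuzzy_family :: "'a set \<Rightarrow> ('a set \<Rightarrow> real) \<Rightarrow> bool" where
  "fuzzy_family G \<R> \<longleftrightarrow> (\<forall>B. B \<subseteq> G \<longrightarrow> 0 \<le> \<R> B \<and> \<R> B \<le> 1)"

definition Kcov :: "('a set \<Rightarrow> real) \<Rightarrow> 'a set \<Rightarrow> real" where
  "Kcov \<R> G = infI ((\<lambda>x. supI {\<R> B | B. B \<subseteq> G \<and> x \<in> B}) ` G)"

definition incl_deg :: "'a set \<Rightarrow> ('a set \<Rightarrow> real) \<Rightarrow> ('a set \<Rightarrow> real) \<Rightarrow> real" where
  "incl_deg G \<R> \<rho> = infI {min 1 (1 - \<R> B + \<rho> B) | B. B \<subseteq> G}"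

definition FF :: "'a set \<Rightarrow> ('a set \<Rightarrow> real) \<Rightarrow> real" where
  "FF G \<P> = 1 - infI {\<delta>. 0 \<le> \<delta> \<and> \<delta> \<le> 1 \<and> finite {B. B \<subseteq> G \<and> \<P> B > \<delta>}}"

definition compact_deg :: "'a set \<Rightarrow> ('a set \<Rightarrow> real) \<Rightarrow> real" where
  "compact_deg G \<rho> = infI {min 1 (1 - max 0 (Kcov \<R> G + incl_deg G \<R> \<rho> - 1)
        + supI {max 0 (Kcov \<P> G + FF G \<P> - 1) | \<P>.
                 fuzzy_family G \<P> \<and> (\<forall>B. B \<subseteq> G \<longrightarrow> \<P> B \<le> \<R> B)})
     | \<R>. fuzzy_family G \<R>}"

definition GammaP :: "('a set \<Rightarrow> real) \<Rightarrow> 'a set \<Rightarrow> real" where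
  "GammaP \<tau> G = compact_deg G (preopen_rel \<tau> G)"

definition LPC :: "('a set \<Rightarrow> real) \<Rightarrow> real" where
  "LPC \<tau> = infI (range (\<lambda>x. supI {max 0 (pnbhd \<tau> x B + GammaP \<tau> B - 1) | B. True}))"

end

theory Submission
  imports Defs
begin



lemma supI_upper: "x \<in> S \<Longrightarrow> bdd_above S \<Longrightarrow> x \<le> supI S"
  unfolding supI_def by (auto intro: cSup_upper)

lemma supI_least: "(\<And>x. x \<in> S \<Longrightarrow> x \<le> c) \<Longrightarrow> 0 \<le> c \<Longrightarrow> supI S \<le> c"
  unfolding supI_def by (auto intro: cSup_least)

lemma supI_nonneg: "(\<And>x. x \<in> S \<Longrightarrow> 0 \<le> x) \<Longrightarrow> bdd_above S \<Longrightarrow> 0 \<le> supI S"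
proof (cases "S = {}")
  case False
  then obtain x where "x \<in> S" by blast
  moreover assume "\<And>x. x \<in> S \<Longrightarrow> 0 \<le> x" "bdd_above S"
  ultimately show ?thesis using supI_upper[of x S] by force
qed (simp add: supI_def)

lemma supI_gt: "bdd_above S \<Longrightarrow> c < supI S \<Longrightarrow> 0 \<le> c \<Longrightarrow> \<exists>x\<in>S. c < x"
  unfolding supI_def by (auto split: if_splits simp: less_cSup_iff)

lemma infI_lower: "x \<in> S \<Longrightarrow> bdd_below S \<Longrightarrow> infI S \<le> x"
  unfolding infI_def by (auto intro: cInf_lower)

lemma infI_greatest: "(\<And>x. x \<in> S \<Longrightarrow> c \<le> x) \<Longrightarrow> c \<le> 1 \<Longrightarrow> c \<le> infI S"
  unfolding infI_def by (auto intro: cInf_greatest)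

lemma infI_lt: "bdd_below S \<Longrightarrow> infI S < c \<Longrightarrow> c \<le> 1 \<Longrightarrow> \<exists>x\<in>S. x < c"
  unfolding infI_def by (auto split: if_splits simp: cInf_less_iff)

lemma bddA: "(\<And>x. x \<in> S \<Longrightarrow> x \<le> (1::real)) \<Longrightarrow> bdd_above S"
  by (rule bdd_aboveI) 

lemma bddB: "(\<And>x. x \<in> S \<Longrightarrow> (0::real) \<le> x) \<Longrightarrow> bdd_below S"
  by (rule bdd_belowI) 

lemma supI_unit: "(\<And>x. x \<in> S \<Longrightarrow> 0 \<le> x \<and> x \<le> 1) \<Longrightarrow> 0 \<le> supI S \<and> supI S \<le> 1"
  using supI_nonneg[of S] supI_least[of S 1] bddA[of S] by auto

lemma infI_unit: "(\<And>x. x \<in> S \<Longrightarrow> 0 \<le> x \<and> x \<le> 1) \<Longrightarrow> 0 \<le> infI S \<and> infI S \<le> 1"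
proof -
  assume h: "\<And>x. x \<in> S \<Longrightarrow> 0 \<le> x \<and> x \<le> 1"
  have "0 \<le> infI S" using infI_greatest[of S 0] h by auto
  moreover have "infI S \<le> 1"
  proof (cases "S = {}")
    case True then show ?thesis by (simp add: infI_def)
  next
    case False then obtain x where "x \<in> S" by blast
    then show ?thesis using infI_lower[of x S] bddB[of S] h by force
  qed
  ultimately show ?thesis by simp
qed




lemma FT_bounds: "fuzzifying_topology \<tau> \<Longrightarrow> 0 \<le> \<tau> A \<and> \<tau> A \<le> 1"
  unfolding fuzzifying_topology_def by auto

lemma FT_UNIV: "fuzzifying_topology \<tau> \<Longrightarrow> \<tau> UNIV = 1"
  unfolding fuzzifying_topology_def by auto

lemma nbhd_bounds: assumes "fuzzifying_topology \<tau>" shows "0 \<le> nbhd \<tau> x A \<and> nbhd \<tau> x A \<le> 1"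
  unfolding nbhd_def by (rule supI_unit) (use FT_bounds[OF assms] in blast)

lemma clos_bounds: "fuzzifying_topology \<tau> \<Longrightarrow> 0 \<le> clos \<tau> A x \<and> clos \<tau> A x \<le> 1"
  unfolding clos_def using nbhd_bounds[of \<tau> x "- A"] by auto

lemma interior_bounds:
  assumes "fuzzifying_topology \<tau>" "\<And>y. 0 \<le> \<mu> y \<and> \<mu> y \<le> 1"
  shows "0 \<le> interior_fz \<tau> \<mu> x \<and> interior_fz \<tau> \<mu> x \<le> 1"
  unfolding interior_fz_def
proof (rule supI_unit)
  fix u assume "u \<in> {min (\<tau> B) (infI (\<mu> ` B)) |B. x \<in> B}"
  then obtain B where u: "u = min (\<tau> B) (infI (\<mu> ` B))" by blast
  have "0 \<le> infI (\<mu> ` B) \<and> infI (\<mu> ` B) \<le> 1" by (rule infI_unit) (use assms in auto)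
  then show "0 \<le> u \<and> u \<le> 1" using u FT_bounds[OF assms(1), of B] by auto
qed

lemma preopen_bounds: assumes "fuzzifying_topology \<tau>" shows "0 \<le> preopen \<tau> A \<and> preopen \<tau> A \<le> 1"
  unfolding preopen_def
proof (rule infI_unit)
  fix u assume "u \<in> (\<lambda>x. interior_fz \<tau> (clos \<tau> A) x) ` A"
  then show "0 \<le> u \<and> u \<le> 1" using interior_bounds[OF assms, of "clos \<tau> A"] clos_bounds[OF assms] by auto
qed

lemma pnbhd_bounds: assumes "fuzzifying_topology \<tau>" shows "0 \<le> pnbhd \<tau> x A \<and> pnbhd \<tau> x A \<le> 1"
  unfolding pnbhd_def by (rule supI_unit) (use preopen_bounds[OF assms] in blast)

lemma preopen_rel_bounds: assumes "fuzzifying_topology \<tau>" shows "0 \<le> preopen_rel \<tau> G A \<and> preopen_rel \<tau> G A \<le> 1"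
  unfolding preopen_rel_def by (rule supI_unit) (use preopen_bounds[OF assms] in blast)

lemma pnbhd_ge: assumes "fuzzifying_topology \<tau>" "x \<in> B" "B \<subseteq> A" shows "preopen \<tau> B \<le> pnbhd \<tau> x A"
  unfolding pnbhd_def by (rule supI_upper) (use assms preopen_bounds[OF assms(1)] in \<open>auto intro!: bddA\<close>)

lemma pnbhd_gt: assumes "fuzzifying_topology \<tau>" "c < pnbhd \<tau> x A" "0 \<le> c"
  shows "\<exists>B. x \<in> B \<and> B \<subseteq> A \<and> c < preopen \<tau> B"
proof -
  have "bdd_above {preopen \<tau> B |B. x \<in> B \<and> B \<subseteq> A}"
    by (rule bddA) (use preopen_bounds[OF assms(1)] in blast)
  from supI_gt[OF this] assms(2,3) show ?thesis unfolding pnbhd_def by blast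
qed

lemma preopen_rel_ge: assumes "fuzzifying_topology \<tau>" shows "preopen \<tau> W \<le> preopen_rel \<tau> G (W \<inter> G)"
  unfolding preopen_rel_def by (rule supI_upper) (use preopen_bounds[OF assms] in \<open>auto intro!: bddA\<close>)

lemma preopen_rel_gt: assumes "fuzzifying_topology \<tau>" "c < preopen_rel \<tau> G B" "0 \<le> c"
  shows "\<exists>W. W \<inter> G = B \<and> c < preopen \<tau> W"
proof -
  have "bdd_above {preopen \<tau> V |V. V \<inter> G = B}"
    by (rule bddA) (use preopen_bounds[OF assms(1)] in blast)
  from supI_gt[OF this] assms(2,3) show ?thesis unfolding preopen_rel_def by blast
qed

lemma preopen_empty: "preopen \<tau> {} = 1"
  unfolding preopen_def infI_def by simp

lemma preopen_UNIV: assumes "fuzzifying_topology \<tau>" shows "preopen \<tau> UNIV = 1"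
proof -
  have c: "clos \<tau> UNIV y = 1" for y
    unfolding clos_def nbhd_def supI_def by simp
  have "1 \<le> interior_fz \<tau> (clos \<tau> UNIV) y" for y
  proof -
    have "min (\<tau> UNIV) (infI (clos \<tau> UNIV ` UNIV)) \<le> interior_fz \<tau> (clos \<tau> UNIV) y"
      unfolding interior_fz_def
      by (rule supI_upper) (use FT_bounds[OF assms] in \<open>auto intro!: bddA simp: min_le_iff_disj\<close>)
    moreover have "infI (clos \<tau> UNIV ` UNIV) = 1" using c by (simp add: infI_def)
    ultimately show ?thesis using FT_UNIV[OF assms] by simp
  qed
  then have "1 \<le> preopen \<tau> UNIV" unfolding preopen_def by (intro infI_greatest) auto
  then show ?thesis using preopen_bounds[OF assms, of UNIV] by simp
qed




lemma nbhd_mono: assumes "fuzzifying_topology \<tau>" "A \<subseteq> A'" shows "nbhd \<tau> x A \<le> nbhd \<tau> x A'"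
proof -
  have "bdd_above {\<tau> B |B. x \<in> B \<and> B \<subseteq> A'}" by (rule bddA) (use FT_bounds[OF assms(1)] in blast)
  then have "u \<le> nbhd \<tau> x A'" if "u \<in> {\<tau> B |B. x \<in> B \<and> B \<subseteq> A}" for u
    unfolding nbhd_def using that assms(2) by (intro supI_upper) auto
  then show ?thesis unfolding nbhd_def[of \<tau> x A]
    by (intro supI_least) (use nbhd_bounds[OF assms(1)] in auto)
qed

lemma clos_mono: assumes "fuzzifying_topology \<tau>" "A \<subseteq> A'" shows "clos \<tau> A x \<le> clos \<tau> A' x"
  unfolding clos_def using nbhd_mono[OF assms(1), of "- A'" "- A" x] assms(2) by auto

lemma infI_img_mono: assumes "\<And>y. y \<in> B \<Longrightarrow> \<mu> y \<le> \<mu>' y" "\<And>y. 0 \<le> (\<mu>::'a\<Rightarrow>real) y \<and> \<mu> y \<le> 1"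
  shows "infI (\<mu> ` B) \<le> infI (\<mu>' ` B)"
proof (cases "B = {}")
  case True then show ?thesis by (simp add: infI_def)
next
  case False
  have b: "bdd_below (\<mu> ` B)" by (rule bddB) (use assms in auto)
  have "infI (\<mu> ` B) \<le> u" if uu: "u \<in> \<mu>' ` B" for u
  proof -
    obtain y where "y \<in> B" "u = \<mu>' y" using uu by blast
    then show ?thesis using infI_lower[of "\<mu> y" "\<mu> ` B"] b assms(1)[of y] by force
  qed
  moreover have "infI (\<mu> ` B) \<le> 1" using infI_unit[of "\<mu> ` B"] assms(2) by auto
  ultimately show ?thesis by (intro infI_greatest)
qed

lemma interior_mono:
  assumes FT: "fuzzifying_topology \<tau>" and le: "\<And>y. \<mu> y \<le> \<mu>' y"
    and b1: "\<And>y. 0 \<le> \<mu> y \<and> \<mu> y \<le> 1" and b2: "\<And>y. 0 \<le> \<mu>' y \<and> \<mu>' y \<le> 1"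
  shows "interior_fz \<tau> \<mu> x \<le> interior_fz \<tau> \<mu>' x"
proof -
  have bd: "bdd_above {min (\<tau> B) (infI (\<mu>' ` B)) |B. x \<in> B}"
  proof (rule bddA)
    fix u assume "u \<in> {min (\<tau> B) (infI (\<mu>' ` B)) |B. x \<in> B}"
    then obtain B where "u = min (\<tau> B) (infI (\<mu>' ` B))" by blast
    then have "u \<le> \<tau> B" by simp
    then show "u \<le> 1" using FT_bounds[OF FT, of B] by linarith
  qed
  have "u \<le> interior_fz \<tau> \<mu>' x" if uu: "u \<in> {min (\<tau> B) (infI (\<mu> ` B)) |B. x \<in> B}" for u
  proof -
    obtain B where B: "x \<in> B" "u = min (\<tau> B) (infI (\<mu> ` B))" using uu by blast
    have "infI (\<mu> ` B) \<le> infI (\<mu>' ` B)" by (rule infI_img_mono) (use le b1 in blast)+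
    then have "u \<le> min (\<tau> B) (infI (\<mu>' ` B))" using B by linarith
    also have "\<dots> \<le> interior_fz \<tau> \<mu>' x" unfolding interior_fz_def
    proof (rule supI_upper[OF _ bd])
      show "min (\<tau> B) (infI (\<mu>' ` B)) \<in> {min (\<tau> B) (infI (\<mu>' ` B)) |B. x \<in> B}" using B(1) by blast
    qed
    finally show ?thesis .
  qed
  moreover have "0 \<le> interior_fz \<tau> \<mu>' x" using interior_bounds[of \<tau> \<mu>' x] FT b2 by blast
  ultimately show ?thesis unfolding interior_fz_def[of \<tau> \<mu> x] by (rule supI_least)
qed

lemma preopen_le_int: assumes "fuzzifying_topology \<tau>" "x \<in> A"
  shows "preopen \<tau> A \<le> interior_fz \<tau> (clos \<tau> A) x"
  unfolding preopen_def
  by (rule infI_lower) (use assms interior_bounds[OF assms(1) clos_bounds[OF assms(1)]] in \<open>auto intro!: bddB\<close>)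

lemma preopen_Union: assumes FT: "fuzzifying_topology \<tau>" and "\<And>A. A \<in> \<A> \<Longrightarrow> s \<le> preopen \<tau> A" "s \<le> 1"
  shows "s \<le> preopen \<tau> (\<Union>\<A>)"
  unfolding preopen_def
proof (rule infI_greatest)
  fix u assume "u \<in> (\<lambda>x. interior_fz \<tau> (clos \<tau> (\<Union>\<A>)) x) ` \<Union>\<A>"
  then obtain x A where xA: "A \<in> \<A>" "x \<in> A" "u = interior_fz \<tau> (clos \<tau> (\<Union>\<A>)) x" by auto
  have "s \<le> preopen \<tau> A" using assms xA by auto
  also have "\<dots> \<le> interior_fz \<tau> (clos \<tau> A) x" by (rule preopen_le_int) (use FT xA in auto)
  also have "\<dots> \<le> u" unfolding xA(3)
  proof (rule interior_mono[OF FT])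
    show "clos \<tau> A y \<le> clos \<tau> (\<Union>\<A>) y" for y using clos_mono[OF FT, of A "\<Union>\<A>"] xA(1) by blast
  qed (use clos_bounds[OF FT] in blast)+
  finally show "s \<le> u" .
qed fact

lemma preopen_Inter:
  assumes FT: "fuzzifying_topology \<tau>"
    and H: "\<forall>A B. preopen \<tau> (A \<inter> B) \<ge> min (preopen \<tau> A) (preopen \<tau> B)"
    and "finite F" "\<And>A. A \<in> F \<Longrightarrow> s \<le> preopen \<tau> A" "s \<le> 1"
  shows "s \<le> preopen \<tau> (\<Inter>F)"
  using assms(3,4)
proof (induction F rule: finite_induct)
  case empty then show ?case using preopen_UNIV[OF FT] assms(5) by simp
next
  case (insert A F)
  then have "s \<le> preopen \<tau> A" "s \<le> preopen \<tau> (\<Inter>F)" by auto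
  then show ?case using H[rule_format, of A "\<Inter>F"] by simp
qed

lemma T2_sep:
  assumes FT: "fuzzifying_topology \<tau>" and s: "0 \<le> s" "s < T2P \<tau>" and zy: "z \<noteq> y"
  shows "\<exists>B C. z \<in> B \<and> y \<in> C \<and> B \<inter> C = {} \<and> s < preopen \<tau> B \<and> s < preopen \<tau> C"
proof -
  define SS where "SS = (\<lambda>x y. {min (pnbhd \<tau> x B) (pnbhd \<tau> y C) |B C. B \<inter> C = {}})"
  have unit: "0 \<le> u \<and> u \<le> 1" if uu: "u \<in> SS x y" for u x y
  proof -
    obtain B C where "u = min (pnbhd \<tau> x B) (pnbhd \<tau> y C)" using uu unfolding SS_def by blast
    then show ?thesis using pnbhd_bounds[OF FT, of x B] pnbhd_bounds[OF FT, of y C] by linarith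
  qed
  have bS: "bdd_above (SS z y)" by (rule bddA) (use unit in blast)
  have T: "T2P \<tau> = infI {supI (SS x y) | x y. x \<noteq> y}" unfolding T2P_def SS_def by simp
  have bb: "bdd_below {supI (SS x y) | x y. x \<noteq> y}"
  proof (rule bddB)
    fix u assume "u \<in> {supI (SS x y) | x y. x \<noteq> y}"
    then obtain x y where "u = supI (SS x y)" by blast
    then show "0 \<le> u" using supI_unit[of "SS x y"] unit by blast
  qed
  have mem: "supI (SS z y) \<in> {supI (SS x y) | x y. x \<noteq> y}" using zy by blast
  have "T2P \<tau> \<le> supI (SS z y)" unfolding T using infI_lower[OF mem bb] .
  then have "s < supI (SS z y)" using s by linarith
  then obtain u where "u \<in> SS z y" "s < u" using supI_gt[OF bS _ s(1)] by blast
  then obtain B C where BC: "B \<inter> C = {}" "s < pnbhd \<tau> z B" "s < pnbhd \<tau> y C"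
    unfolding SS_def by auto
  obtain B' where B': "z \<in> B'" "B' \<subseteq> B" "s < preopen \<tau> B'" using pnbhd_gt[OF FT BC(2) s(1)] by blast
  obtain C' where C': "y \<in> C'" "C' \<subseteq> C" "s < preopen \<tau> C'" using pnbhd_gt[OF FT BC(3) s(1)] by blast
  show ?thesis using B' C' BC(1) by blast
qed




definition Sd :: "'a set \<Rightarrow> ('a set \<Rightarrow> real) \<Rightarrow> real" where
  "Sd G R = supI {max 0 (Kcov P G + FF G P - 1) | P. fuzzy_family G P \<and> (\<forall>B. B \<subseteq> G \<longrightarrow> P B \<le> R B)}"

definition trm :: "'a set \<Rightarrow> ('a set \<Rightarrow> real) \<Rightarrow> ('a set \<Rightarrow> real) \<Rightarrow> real" where
  "trm G \<rho> R = min 1 (1 - max 0 (Kcov R G + incl_deg G R \<rho> - 1) + Sd G R)"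

lemma cd_eq: "compact_deg G \<rho> = infI {trm G \<rho> R | R. fuzzy_family G R}"
  unfolding compact_deg_def trm_def Sd_def by simp

lemma Kcov_bounds: assumes "fuzzy_family G R" shows "0 \<le> Kcov R G \<and> Kcov R G \<le> 1"
  unfolding Kcov_def
proof (rule infI_unit)
  fix u assume "u \<in> (\<lambda>x. supI {R B |B. B \<subseteq> G \<and> x \<in> B}) ` G"
  then obtain x where u: "u = supI {R B |B. B \<subseteq> G \<and> x \<in> B}" by blast
  have "0 \<le> supI {R B |B. B \<subseteq> G \<and> x \<in> B} \<and> supI {R B |B. B \<subseteq> G \<and> x \<in> B} \<le> 1"
    by (rule supI_unit) (use assms in \<open>auto simp: fuzzy_family_def\<close>)
  then show "0 \<le> u \<and> u \<le> 1" using u by simp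
qed

lemma FF_bounds: "0 \<le> FF G P \<and> FF G P \<le> 1"
proof -
  have "0 \<le> infI {\<delta>. 0 \<le> \<delta> \<and> \<delta> \<le> 1 \<and> finite {B. B \<subseteq> G \<and> P B > \<delta>}} \<and>
        infI {\<delta>. 0 \<le> \<delta> \<and> \<delta> \<le> 1 \<and> finite {B. B \<subseteq> G \<and> P B > \<delta>}} \<le> 1"
    by (rule infI_unit) auto
  then show ?thesis unfolding FF_def by linarith
qed

lemma incl_bounds: assumes "fuzzy_family G R" "\<And>B. B \<subseteq> G \<Longrightarrow> 0 \<le> \<rho> B"
  shows "0 \<le> incl_deg G R \<rho> \<and> incl_deg G R \<rho> \<le> 1"
  unfolding incl_deg_def
proof (rule infI_unit)
  fix u assume "u \<in> {min 1 (1 - R B + \<rho> B) |B. B \<subseteq> G}"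
  then obtain B where "B \<subseteq> G" "u = min 1 (1 - R B + \<rho> B)" by blast
  then show "0 \<le> u \<and> u \<le> 1" using assms(1) assms(2)[of B] unfolding fuzzy_family_def by auto
qed

lemma Sd_bounds: "0 \<le> Sd G R \<and> Sd G R \<le> 1"
  unfolding Sd_def
proof (rule supI_unit)
  fix u assume "u \<in> {max 0 (Kcov P G + FF G P - 1) | P. fuzzy_family G P \<and> (\<forall>B. B \<subseteq> G \<longrightarrow> P B \<le> R B)}"
  then obtain P where "fuzzy_family G P" "u = max 0 (Kcov P G + FF G P - 1)" by blast
  then show "0 \<le> u \<and> u \<le> 1" using Kcov_bounds[of G P] FF_bounds[of G P] by auto
qed

lemma trm_bounds: assumes "fuzzy_family G R" "\<And>B. B \<subseteq> G \<Longrightarrow> 0 \<le> \<rho> B"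
  shows "0 \<le> trm G \<rho> R \<and> trm G \<rho> R \<le> 1"
proof -
  have "0 \<le> incl_deg G R \<rho> \<and> incl_deg G R \<rho> \<le> 1" using incl_bounds[of G R \<rho>] assms by blast
  then show ?thesis
  unfolding trm_def using Kcov_bounds[OF assms(1)] Sd_bounds[of G R] by auto
qed

lemma cd_bounds: assumes "\<And>B. B \<subseteq> G \<Longrightarrow> 0 \<le> \<rho> B"
  shows "0 \<le> compact_deg G \<rho> \<and> compact_deg G \<rho> \<le> 1"
  unfolding cd_eq
proof (rule infI_unit)
  fix u assume "u \<in> {trm G \<rho> R | R. fuzzy_family G R}"
  then obtain R where "fuzzy_family G R" "u = trm G \<rho> R" by blast
  then show "0 \<le> u \<and> u \<le> 1" using trm_bounds[of G R \<rho>] assms by auto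
qed

lemma cd_le_trm: assumes "fuzzy_family G R" "\<And>B. B \<subseteq> G \<Longrightarrow> 0 \<le> \<rho> B"
  shows "compact_deg G \<rho> \<le> trm G \<rho> R"
  unfolding cd_eq
proof (rule infI_lower)
  show "trm G \<rho> R \<in> {trm G \<rho> R | R. fuzzy_family G R}" using assms(1) by blast
  show "bdd_below {trm G \<rho> R | R. fuzzy_family G R}"
  proof (rule bddB)
    fix u assume "u \<in> {trm G \<rho> R | R. fuzzy_family G R}"
    then obtain R where "fuzzy_family G R" "u = trm G \<rho> R" by blast
    then show "0 \<le> u" using trm_bounds[of G R \<rho>] assms(2) by auto
  qed
qed

lemma Gamma_bounds: assumes "fuzzifying_topology \<tau>" shows "0 \<le> GammaP \<tau> G \<and> GammaP \<tau> G \<le> 1"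
  unfolding GammaP_def by (rule cd_bounds) (use preopen_rel_bounds[OF assms] in blast)

lemma Gamma_le_trm: assumes "fuzzifying_topology \<tau>" "fuzzy_family G R"
  shows "GammaP \<tau> G \<le> trm G (preopen_rel \<tau> G) R"
  unfolding GammaP_def by (rule cd_le_trm[OF assms(2)]) (use preopen_rel_bounds[OF assms(1)] in blast)

lemma Sd_ge: assumes "fuzzy_family G P" "\<And>B. B \<subseteq> G \<Longrightarrow> P B \<le> R B"
  shows "max 0 (Kcov P G + FF G P - 1) \<le> Sd G R"
  unfolding Sd_def
proof (rule supI_upper)
  show "max 0 (Kcov P G + FF G P - 1) \<in> {max 0 (Kcov P G + FF G P - 1) | P. fuzzy_family G P \<and> (\<forall>B. B \<subseteq> G \<longrightarrow> P B \<le> R B)}"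
    using assms by blast
  show "bdd_above {max 0 (Kcov P G + FF G P - 1) | P. fuzzy_family G P \<and> (\<forall>B. B \<subseteq> G \<longrightarrow> P B \<le> R B)}"
  proof (rule bddA)
    fix u assume "u \<in> {max 0 (Kcov P G + FF G P - 1) | P. fuzzy_family G P \<and> (\<forall>B. B \<subseteq> G \<longrightarrow> P B \<le> R B)}"
    then obtain P where "fuzzy_family G P" "u = max 0 (Kcov P G + FF G P - 1)" by blast
    then show "u \<le> 1" using Kcov_bounds[of G P] FF_bounds[of G P] by auto
  qed
qed

lemma Sd_gt: assumes "0 < Sd G R"
  shows "\<exists>P. fuzzy_family G P \<and> (\<forall>B. B \<subseteq> G \<longrightarrow> P B \<le> R B) \<and> 0 < Kcov P G + FF G P - 1"
proof -
  let ?S = "{max 0 (Kcov P G + FF G P - 1) | P. fuzzy_family G P \<and> (\<forall>B. B \<subseteq> G \<longrightarrow> P B \<le> R B)}"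
  have "bdd_above ?S"
  proof (rule bddA)
    fix u assume "u \<in> ?S"
    then obtain P where "fuzzy_family G P" "u = max 0 (Kcov P G + FF G P - 1)" by blast
    then show "u \<le> 1" using Kcov_bounds[of G P] FF_bounds[of G P] by auto
  qed
  from supI_gt[OF this, of 0] assms obtain u where "u \<in> ?S" "0 < u" unfolding Sd_def by auto
  then show ?thesis by (auto simp: max_def split: if_splits)
qed




lemma T2P_bounds: assumes FT: "fuzzifying_topology \<tau>" shows "0 \<le> T2P \<tau> \<and> T2P \<tau> \<le> 1"
  unfolding T2P_def
proof (rule infI_unit)
  fix u assume "u \<in> {supI {min (pnbhd \<tau> x B) (pnbhd \<tau> y C) |B C. B \<inter> C = {}} |x y. x \<noteq> y}"
  then obtain x y where u: "u = supI {min (pnbhd \<tau> x B) (pnbhd \<tau> y C) |B C. B \<inter> C = {}}" by blast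
  have "0 \<le> supI {min (pnbhd \<tau> x B) (pnbhd \<tau> y C) |B C. B \<inter> C = {}} \<and>
        supI {min (pnbhd \<tau> x B) (pnbhd \<tau> y C) |B C. B \<inter> C = {}} \<le> 1"
  proof (rule supI_unit)
    fix v assume "v \<in> {min (pnbhd \<tau> x B) (pnbhd \<tau> y C) |B C. B \<inter> C = {}}"
    then obtain B C where "v = min (pnbhd \<tau> x B) (pnbhd \<tau> y C)" by blast
    then show "0 \<le> v \<and> v \<le> 1" using pnbhd_bounds[OF FT, of x B] pnbhd_bounds[OF FT, of y C] by linarith
  qed
  then show "0 \<le> u \<and> u \<le> 1" using u by simp
qed

lemma SEP:
  assumes FT: "fuzzifying_topology \<tau>"
    and H: "\<forall>A B. preopen \<tau> (A \<inter> B) \<ge> min (preopen \<tau> A) (preopen \<tau> B)"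
    and zC: "z \<notin> C" and s0: "0 \<le> s" and sT: "s < T2P \<tau>" and sG: "1 < s + GammaP \<tau> C"
  shows "\<exists>P Q. z \<in> P \<and> C \<subseteq> Q \<and> P \<inter> Q = {} \<and> s \<le> preopen \<tau> P \<and> s \<le> preopen \<tau> Q"
proof (cases "C = {}")
  case True
  then show ?thesis using preopen_UNIV[OF FT] preopen_empty[of \<tau>] T2P_bounds[OF FT] sT
    by (intro exI[of _ UNIV] exI[of _ "{}"]) auto
next
  case Cne: False
  have s1: "s \<le> 1" using T2P_bounds[OF FT] sT by linarith
  have "\<forall>y\<in>C. \<exists>B D. z \<in> B \<and> y \<in> D \<and> B \<inter> D = {} \<and> s < preopen \<tau> B \<and> s < preopen \<tau> D"
    using T2_sep[OF FT s0 sT] zC by metis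
  then obtain Bf Df where BD: "\<And>y. y \<in> C \<Longrightarrow> z \<in> Bf y \<and> y \<in> Df y \<and> Bf y \<inter> Df y = {} \<and>
      s < preopen \<tau> (Bf y) \<and> s < preopen \<tau> (Df y)" by metis
  define R where "R = (\<lambda>E. if \<exists>y\<in>C. E = Df y \<inter> C then 1 else (0::real))"
  let ?\<rho> = "preopen_rel \<tau> C"
  have fR: "fuzzy_family C R" unfolding fuzzy_family_def R_def by auto
  have K1: "1 \<le> Kcov R C" unfolding Kcov_def
  proof (rule infI_greatest)
    fix u assume "u \<in> (\<lambda>x. supI {R B |B. B \<subseteq> C \<and> x \<in> B}) ` C"
    then obtain w where w: "w \<in> C" "u = supI {R B |B. B \<subseteq> C \<and> w \<in> B}" by blast
    have "R (Df w \<inter> C) \<le> supI {R B |B. B \<subseteq> C \<and> w \<in> B}"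
    proof (rule supI_upper)
      show "R (Df w \<inter> C) \<in> {R B |B. B \<subseteq> C \<and> w \<in> B}" using w BD[of w] by blast
      show "bdd_above {R B |B. B \<subseteq> C \<and> w \<in> B}" by (rule bddA) (auto simp: R_def)
    qed
    moreover have "R (Df w \<inter> C) = 1" unfolding R_def using w by auto
    ultimately show "1 \<le> u" using w by simp
  qed simp
  have Kc: "Kcov R C = 1" using K1 Kcov_bounds[OF fR] by simp
  have Is: "s \<le> incl_deg C R ?\<rho>" unfolding incl_deg_def
  proof (rule infI_greatest)
    fix u assume "u \<in> {min 1 (1 - R B + ?\<rho> B) |B. B \<subseteq> C}"
    then obtain B where B: "B \<subseteq> C" "u = min 1 (1 - R B + ?\<rho> B)" by blast
    show "s \<le> u"
    proof (cases "\<exists>y\<in>C. B = Df y \<inter> C")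
      case True
      then obtain y where y: "y \<in> C" "B = Df y \<inter> C" by blast
      have "preopen \<tau> (Df y) \<le> ?\<rho> B" using preopen_rel_ge[OF FT, of "Df y" C] y by simp
      then show ?thesis using B y BD[of y] s1 unfolding R_def by auto
    next
      case False
      then show ?thesis using B preopen_rel_bounds[OF FT, of C B] s1 unfolding R_def by auto
    qed
  qed fact
  have "GammaP \<tau> C \<le> trm C ?\<rho> R" by (rule Gamma_le_trm[OF FT fR])
  then have "GammaP \<tau> C \<le> 1 - max 0 (Kcov R C + incl_deg C R ?\<rho> - 1) + Sd C R"
    unfolding trm_def by linarith
  then have "0 < Sd C R" using Kc Is s0 sG by (auto simp: max_def split: if_splits)
  then obtain P where fP: "fuzzy_family C P" and PR: "\<forall>B. B \<subseteq> C \<longrightarrow> P B \<le> R B"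
    and KF: "0 < Kcov P C + FF C P - 1" using Sd_gt by blast
  define \<Delta> where "\<Delta> = {\<delta>. 0 \<le> \<delta> \<and> \<delta> \<le> 1 \<and> finite {B. B \<subseteq> C \<and> P B > \<delta>}}"
  have "infI \<Delta> < Kcov P C" using KF unfolding FF_def \<Delta>_def by simp
  moreover have "bdd_below \<Delta>" by (rule bddB) (simp add: \<Delta>_def)
  ultimately obtain \<delta> where "\<delta> \<in> \<Delta>" "\<delta> < Kcov P C"
    using infI_lt[of \<Delta> "Kcov P C"] Kcov_bounds[OF fP] by blast
  then have d0: "0 \<le> \<delta>" and fin: "finite {B. B \<subseteq> C \<and> P B > \<delta>}" and dK: "\<delta> < Kcov P C"
    unfolding \<Delta>_def by auto
  define F where "F = {B. B \<subseteq> C \<and> P B > \<delta>}"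
  have cover: "\<exists>E\<in>F. w \<in> E" if w: "w \<in> C" for w
  proof -
    have bS: "bdd_above {P B |B. B \<subseteq> C \<and> w \<in> B}"
      by (rule bddA) (use fP in \<open>auto simp: fuzzy_family_def\<close>)
    have "0 \<le> supI {P B |B. B \<subseteq> C \<and> w \<in> B}"
      by (rule supI_nonneg) (use fP bS in \<open>auto simp: fuzzy_family_def\<close>)
    have "Kcov P C \<le> supI {P B |B. B \<subseteq> C \<and> w \<in> B}" unfolding Kcov_def
    proof (rule infI_lower)
      show "supI {P B |B. B \<subseteq> C \<and> w \<in> B} \<in> (\<lambda>x. supI {P B |B. B \<subseteq> C \<and> x \<in> B}) ` C" using w by blast
      show "bdd_below ((\<lambda>x. supI {P B |B. B \<subseteq> C \<and> x \<in> B}) ` C)"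
      proof (rule bddB)
        fix u assume "u \<in> (\<lambda>x. supI {P B |B. B \<subseteq> C \<and> x \<in> B}) ` C"
        then obtain x where "u = supI {P B |B. B \<subseteq> C \<and> x \<in> B}" by blast
        moreover have "0 \<le> supI {P B |B. B \<subseteq> C \<and> x \<in> B} \<and> supI {P B |B. B \<subseteq> C \<and> x \<in> B} \<le> 1"
          by (rule supI_unit) (use fP in \<open>auto simp: fuzzy_family_def\<close>)
        ultimately show "0 \<le> u" by simp
      qed
    qed
    then have "\<delta> < supI {P B |B. B \<subseteq> C \<and> w \<in> B}" using dK by linarith
    then obtain v where "v \<in> {P B |B. B \<subseteq> C \<and> w \<in> B}" "\<delta> < v" using supI_gt[OF bS _ d0] by blast
    then show ?thesis unfolding F_def by blast
  qed
  have "\<forall>E\<in>F. \<exists>y\<in>C. E = Df y \<inter> C"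
  proof
    fix E assume "E \<in> F"
    then have "E \<subseteq> C" "\<delta> < P E" unfolding F_def by auto
    then have "0 < R E" using PR d0 by force
    then show "\<exists>y\<in>C. E = Df y \<inter> C" unfolding R_def by (auto split: if_splits)
  qed
  then obtain yf where yf: "\<And>E. E \<in> F \<Longrightarrow> yf E \<in> C \<and> E = Df (yf E) \<inter> C" by metis
  have finF: "finite F" using fin unfolding F_def .
  define P0 where "P0 = \<Inter> ((\<lambda>E. Bf (yf E)) ` F)"
  define Q0 where "Q0 = \<Union> ((\<lambda>E. Df (yf E)) ` F)"
  have "z \<in> P0" unfolding P0_def using BD yf by blast
  moreover have "C \<subseteq> Q0"
  proof
    fix w assume "w \<in> C"
    then obtain E where "E \<in> F" "w \<in> E" using cover by blast
    then show "w \<in> Q0" unfolding Q0_def using yf[of E] by blast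
  qed
  moreover have "P0 \<inter> Q0 = {}"
  proof -
    have "x \<notin> P0" if "x \<in> Df (yf E)" "E \<in> F" for x E
      using that BD[of "yf E"] yf[of E] unfolding P0_def by blast
    then show ?thesis unfolding Q0_def by blast
  qed
  moreover have "s \<le> preopen \<tau> P0" unfolding P0_def
    by (rule preopen_Inter[OF FT H]) (use finF BD yf s1 in \<open>auto intro: less_imp_le\<close>)
  moreover have "s \<le> preopen \<tau> Q0" unfolding Q0_def
    by (rule preopen_Union[OF FT]) (use BD yf s1 in \<open>auto intro: less_imp_le\<close>)
  ultimately show ?thesis by blast
qed




lemma CL_key:
  assumes FT: "fuzzifying_topology \<tau>" and VK: "V \<subseteq> K" and c0: "0 \<le> c" and c1: "c \<le> 1"
    and wit: "\<And>y. y \<in> K - V \<Longrightarrow> \<exists>Z. y \<in> Z \<and> Z \<inter> V = {} \<and> c \<le> preopen \<tau> Z"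
    and fR: "fuzzy_family V R" and e0: "0 < e"
  shows "GammaP \<tau> K + min c (Kcov R V + incl_deg V R (preopen_rel \<tau> V) - 1 - 2*e) - 1 \<le> Sd V R"
proof -
  let ?\<rho>V = "preopen_rel \<tau> V" and ?\<rho>K = "preopen_rel \<tau> K"
  define k where "k = Kcov R V"
  define i where "i = incl_deg V R ?\<rho>V"
  have kb: "0 \<le> k \<and> k \<le> 1" unfolding k_def by (rule Kcov_bounds[OF fR])
  have ib: "0 \<le> i \<and> i \<le> 1" unfolding i_def using incl_bounds[of V R ?\<rho>V] fR preopen_rel_bounds[OF FT] by blast
  have Rb: "0 \<le> R D \<and> R D \<le> 1" if "D \<subseteq> V" for D using fR that unfolding fuzzy_family_def by blast
  have "\<exists>W. W \<inter> V = D \<and> R D + i - 1 - e \<le> preopen \<tau> W" if D: "D \<subseteq> V" for D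
  proof -
    have "i \<le> min 1 (1 - R D + ?\<rho>V D)" unfolding i_def incl_deg_def
    proof (rule infI_lower)
      show "min 1 (1 - R D + ?\<rho>V D) \<in> {min 1 (1 - R B + ?\<rho>V B) |B. B \<subseteq> V}" using D by blast
      show "bdd_below {min 1 (1 - R B + ?\<rho>V B) |B. B \<subseteq> V}"
      proof (rule bddB)
        fix u assume "u \<in> {min 1 (1 - R B + ?\<rho>V B) |B. B \<subseteq> V}"
        then obtain B where "B \<subseteq> V" "u = min 1 (1 - R B + ?\<rho>V B)" by blast
        then show "0 \<le> u" using Rb[of B] preopen_rel_bounds[OF FT, of V B] by auto
      qed
    qed
    then have ge: "R D + i - 1 \<le> ?\<rho>V D" by linarith
    show ?thesis
    proof (cases "R D + i - 1 - e < 0")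
      case True
      then show ?thesis using D preopen_bounds[OF FT, of D] by (intro exI[of _ D]) auto
    next
      case False
      then have "R D + i - 1 - e < ?\<rho>V D" using ge e0 by linarith
      from preopen_rel_gt[OF FT this] False obtain W where "W \<inter> V = D" "R D + i - 1 - e < preopen \<tau> W"
        by auto
      then show ?thesis by (intro exI[of _ W]) auto
    qed
  qed
  then obtain Wf where Wf: "\<And>D. D \<subseteq> V \<Longrightarrow> Wf D \<inter> V = D \<and> R D + i - 1 - e \<le> preopen \<tau> (Wf D)" by metis
  obtain Zf where Zf: "\<And>y. y \<in> K - V \<Longrightarrow> y \<in> Zf y \<and> Zf y \<inter> V = {} \<and> c \<le> preopen \<tau> (Zf y)"
    using wit by metis
  define A1 where "A1 = (\<lambda>E. if E = Wf (E \<inter> V) \<inter> K then max 0 (R (E \<inter> V) + i - 1 - e) else 0)"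
  define A2 where "A2 = (\<lambda>E. if \<exists>y\<in>K - V. E = Zf y \<inter> K then c else 0)"
  define R' where "R' = (\<lambda>E. max (A1 E) (A2 E))"
  have A1b: "0 \<le> A1 E \<and> A1 E \<le> 1" for E using Rb[of "E \<inter> V"] ib e0 unfolding A1_def by auto
  have A2b: "0 \<le> A2 E \<and> A2 E \<le> 1" for E using c0 c1 unfolding A2_def by auto
  have R'b: "0 \<le> R' E \<and> R' E \<le> 1" for E using A1b[of E] A2b[of E] unfolding R'_def by auto
  have fR': "fuzzy_family K R'" unfolding fuzzy_family_def using R'b by blast
  have R'le: "R' E \<le> ?\<rho>K E" if E: "E \<subseteq> K" for E
  proof -
    have r0: "0 \<le> ?\<rho>K E" using preopen_rel_bounds[OF FT] by blast
    have "A1 E \<le> ?\<rho>K E"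
    proof (cases "E = Wf (E \<inter> V) \<inter> K")
      case True
      have "preopen \<tau> (Wf (E \<inter> V)) \<le> ?\<rho>K (Wf (E \<inter> V) \<inter> K)" by (rule preopen_rel_ge[OF FT])
      then have "preopen \<tau> (Wf (E \<inter> V)) \<le> ?\<rho>K E" using True by simp
      then show ?thesis using True Wf[of "E \<inter> V"] r0 unfolding A1_def by auto
    qed (use r0 in \<open>simp add: A1_def\<close>)
    moreover have "A2 E \<le> ?\<rho>K E"
    proof (cases "\<exists>y\<in>K - V. E = Zf y \<inter> K")
      case True
      then obtain y where y: "y \<in> K - V" "E = Zf y \<inter> K" by blast
      have "preopen \<tau> (Zf y) \<le> ?\<rho>K (Zf y \<inter> K)" by (rule preopen_rel_ge[OF FT])
      then show ?thesis using y Zf[of y] unfolding A2_def by auto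
    qed (use r0 in \<open>simp add: A2_def\<close>)
    ultimately show ?thesis unfolding R'_def by simp
  qed
  have I1: "incl_deg K R' ?\<rho>K = 1"
  proof -
    have "1 \<le> incl_deg K R' ?\<rho>K" unfolding incl_deg_def
    proof (rule infI_greatest)
      fix u assume "u \<in> {min 1 (1 - R' B + ?\<rho>K B) |B. B \<subseteq> K}"
      then obtain B where "B \<subseteq> K" "u = min 1 (1 - R' B + ?\<rho>K B)" by blast
      then show "1 \<le> u" using R'le[of B] by auto
    qed simp
    moreover have "incl_deg K R' ?\<rho>K \<le> 1" using incl_bounds[of K R' ?\<rho>K] fR' preopen_rel_bounds[OF FT] by blast
    ultimately show ?thesis by linarith
  qed
  define m where "m = min c (k + i - 1 - 2*e)"
  have Km: "m \<le> Kcov R' K" unfolding Kcov_def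
  proof (rule infI_greatest)
    fix u assume "u \<in> (\<lambda>x. supI {R' B |B. B \<subseteq> K \<and> x \<in> B}) ` K"
    then obtain w where w: "w \<in> K" "u = supI {R' B |B. B \<subseteq> K \<and> w \<in> B}" by blast
    have bS: "bdd_above {R' B |B. B \<subseteq> K \<and> w \<in> B}" by (rule bddA) (use R'b in blast)
    have u0: "0 \<le> u" unfolding w(2) by (rule supI_nonneg[OF _ bS]) (use R'b in blast)
    show "m \<le> u"
    proof (cases "w \<in> V")
      case wV: True
      show ?thesis
      proof (cases "k - e < 0")
        case True then show ?thesis using u0 ib e0 min.cobounded2[of c "k + i - 1 - 2*e"] unfolding m_def by linarith
      next
        case False
        have bV: "bdd_above {R B |B. B \<subseteq> V \<and> w \<in> B}" by (rule bddA) (use Rb in blast)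
        have "k \<le> supI {R B |B. B \<subseteq> V \<and> w \<in> B}" unfolding k_def Kcov_def
        proof (rule infI_lower)
          show "supI {R B |B. B \<subseteq> V \<and> w \<in> B} \<in> (\<lambda>x. supI {R B |B. B \<subseteq> V \<and> x \<in> B}) ` V" using wV by blast
          show "bdd_below ((\<lambda>x. supI {R B |B. B \<subseteq> V \<and> x \<in> B}) ` V)"
          proof (rule bddB)
            fix u assume "u \<in> (\<lambda>x. supI {R B |B. B \<subseteq> V \<and> x \<in> B}) ` V"
            then obtain x where "u = supI {R B |B. B \<subseteq> V \<and> x \<in> B}" by blast
            moreover have "0 \<le> supI {R B |B. B \<subseteq> V \<and> x \<in> B} \<and> supI {R B |B. B \<subseteq> V \<and> x \<in> B} \<le> 1"
              by (rule supI_unit) (use Rb in blast)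
            ultimately show "0 \<le> u" by simp
          qed
        qed
        then have "k - e < supI {R B |B. B \<subseteq> V \<and> w \<in> B}" using e0 by linarith
        from supI_gt[OF bV this] False obtain v where "v \<in> {R B |B. B \<subseteq> V \<and> w \<in> B}" "k - e < v" by auto
        then obtain D where D: "D \<subseteq> V" "w \<in> D" "k - e < R D" by blast
        define E where "E = Wf D \<inter> K"
        have EV: "E \<inter> V = D" unfolding E_def using Wf[OF D(1)] VK by blast
        have EK: "E \<subseteq> K" "w \<in> E" unfolding E_def using Wf[OF D(1)] D VK w by blast+
        have "A1 E = max 0 (R D + i - 1 - e)" unfolding A1_def using EV E_def by simp
        then have "R D + i - 1 - e \<le> R' E" unfolding R'_def by simp
        also have "R' E \<le> u" unfolding w(2) by (rule supI_upper[OF _ bS]) (use EK in blast)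
        finally show ?thesis using D(3) min.cobounded2[of c "k + i - 1 - 2*e"] unfolding m_def by linarith
      qed
    next
      case wV: False
      define E where "E = Zf w \<inter> K"
      have EK: "E \<subseteq> K" "w \<in> E" unfolding E_def using Zf[of w] wV w by blast+
      have "A2 E = c" unfolding A2_def E_def using wV w by auto
      then have "c \<le> R' E" unfolding R'_def by simp
      also have "R' E \<le> u" unfolding w(2) by (rule supI_upper[OF _ bS]) (use EK in blast)
      finally show ?thesis using min.cobounded1[of c "k + i - 1 - 2*e"] unfolding m_def by linarith
    qed
  next
    show "m \<le> 1" unfolding m_def using c1 min.cobounded1[of c "k + i - 1 - 2*e"] by linarith
  qed
  have "GammaP \<tau> K \<le> trm K ?\<rho>K R'" by (rule Gamma_le_trm[OF FT fR'])
  then have gK: "GammaP \<tau> K \<le> 1 - Kcov R' K + Sd K R'"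
    unfolding trm_def I1 using Kcov_bounds[OF fR'] by simp
  \<comment> \<open>transfer of subfamilies\<close>
  have "Sd K R' \<le> Sd V R" unfolding Sd_def[of K]
  proof (rule supI_least)
    fix u assume "u \<in> {max 0 (Kcov P' K + FF K P' - 1) |P'. fuzzy_family K P' \<and> (\<forall>B. B \<subseteq> K \<longrightarrow> P' B \<le> R' B)}"
    then obtain P' where fP': "fuzzy_family K P'" and P'R: "\<forall>B. B \<subseteq> K \<longrightarrow> P' B \<le> R' B"
      and u: "u = max 0 (Kcov P' K + FF K P' - 1)" by blast
    have P'b: "0 \<le> P' E \<and> P' E \<le> 1" if "E \<subseteq> K" for E using fP' that unfolding fuzzy_family_def by blast
    define P where "P = (\<lambda>D. min (R D) (P' (Wf D \<inter> K)))"
    have Pb: "0 \<le> P D \<and> P D \<le> 1" if "D \<subseteq> V" for D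
      using Rb[OF that] P'b[of "Wf D \<inter> K"] unfolding P_def by auto
    have fP: "fuzzy_family V P" unfolding fuzzy_family_def using Pb by blast
    have PR: "\<And>B. B \<subseteq> V \<Longrightarrow> P B \<le> R B" unfolding P_def by simp
    have keyP: "P' E \<le> P (E \<inter> V)" if E: "E \<subseteq> K" "E \<inter> V \<noteq> {}" "0 < P' E" for E
    proof -
      have "A2 E = 0"
      proof (rule ccontr)
        assume "A2 E \<noteq> 0"
        then obtain y where "y \<in> K - V" "E = Zf y \<inter> K" unfolding A2_def by (auto split: if_splits)
        then show False using Zf[of y] E(2) by blast
      qed
      have "P' E \<le> R' E" using P'R E(1) by blast
      then have "0 < A1 E" using E(3) \<open>A2 E = 0\<close> unfolding R'_def by linarith
      then have EW: "E = Wf (E \<inter> V) \<inter> K"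
        unfolding A1_def by (cases "E = Wf (E \<inter> V) \<inter> K") simp_all
      have A1E: "A1 E = max 0 (R (E \<inter> V) + i - 1 - e)" unfolding A1_def using EW[symmetric] by simp
      have le: "P' E \<le> max 0 (R (E \<inter> V) + i - 1 - e)"
        using \<open>P' E \<le> R' E\<close> \<open>A2 E = 0\<close> A1E A1b[of E] unfolding R'_def by simp
      have "P' E \<le> R (E \<inter> V)" using le Rb[of "E \<inter> V"] ib e0 E(3) by (simp add: max_def split: if_splits)
      moreover have "P (E \<inter> V) = min (R (E \<inter> V)) (P' E)" unfolding P_def using EW[symmetric] by simp
      ultimately show ?thesis by simp
    qed
    have KK: "Kcov P' K \<le> Kcov P V" unfolding Kcov_def[of P V]
    proof (rule infI_greatest)
      fix v assume "v \<in> (\<lambda>x. supI {P B |B. B \<subseteq> V \<and> x \<in> B}) ` V"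
      then obtain w where w: "w \<in> V" "v = supI {P B |B. B \<subseteq> V \<and> w \<in> B}" by blast
      have bV: "bdd_above {P B |B. B \<subseteq> V \<and> w \<in> B}" by (rule bddA) (use Pb in blast)
      have v0: "0 \<le> v" unfolding w(2) by (rule supI_nonneg[OF _ bV]) (use Pb in blast)
      have "Kcov P' K \<le> supI {P' B |B. B \<subseteq> K \<and> w \<in> B}" unfolding Kcov_def
      proof (rule infI_lower)
        show "supI {P' B |B. B \<subseteq> K \<and> w \<in> B} \<in> (\<lambda>x. supI {P' B |B. B \<subseteq> K \<and> x \<in> B}) ` K" using w VK by blast
        show "bdd_below ((\<lambda>x. supI {P' B |B. B \<subseteq> K \<and> x \<in> B}) ` K)"
        proof (rule bddB)
          fix u assume "u \<in> (\<lambda>x. supI {P' B |B. B \<subseteq> K \<and> x \<in> B}) ` K"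
          then obtain x where "u = supI {P' B |B. B \<subseteq> K \<and> x \<in> B}" by blast
          moreover have "0 \<le> supI {P' B |B. B \<subseteq> K \<and> x \<in> B} \<and> supI {P' B |B. B \<subseteq> K \<and> x \<in> B} \<le> 1"
            by (rule supI_unit) (use P'b in blast)
          ultimately show "0 \<le> u" by simp
        qed
      qed
      also have "supI {P' B |B. B \<subseteq> K \<and> w \<in> B} \<le> v"
      proof (rule supI_least[OF _ v0])
        fix x assume "x \<in> {P' B |B. B \<subseteq> K \<and> w \<in> B}"
        then obtain E where E: "E \<subseteq> K" "w \<in> E" "x = P' E" by blast
        show "x \<le> v"
        proof (cases "0 < P' E")
          case True
          have "P' E \<le> P (E \<inter> V)" by (rule keyP) (use E w True in auto)
          also have "P (E \<inter> V) \<le> v" unfolding w(2) by (rule supI_upper[OF _ bV]) (use E w in blast)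
          finally show ?thesis using E by simp
        qed (use E v0 in simp)
      qed
      finally show "Kcov P' K \<le> v" .
    qed (use Kcov_bounds[OF fP'] in simp)
    have FFle: "FF K P' \<le> FF V P"
    proof -
      define \<Delta>K where "\<Delta>K = {\<delta>. 0 \<le> \<delta> \<and> \<delta> \<le> 1 \<and> finite {B. B \<subseteq> K \<and> P' B > \<delta>}}"
      define \<Delta>V where "\<Delta>V = {\<delta>. 0 \<le> \<delta> \<and> \<delta> \<le> 1 \<and> finite {B. B \<subseteq> V \<and> P B > \<delta>}}"
      have sub: "\<Delta>K \<subseteq> \<Delta>V"
      proof
        fix \<delta> assume "\<delta> \<in> \<Delta>K"
        then have d: "0 \<le> \<delta>" "\<delta> \<le> 1" "finite {B. B \<subseteq> K \<and> P' B > \<delta>}" unfolding \<Delta>K_def by auto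
        have "{B. B \<subseteq> V \<and> P B > \<delta>} \<subseteq> (\<lambda>E. E \<inter> V) ` {B. B \<subseteq> K \<and> P' B > \<delta>}"
        proof
          fix D assume "D \<in> {B. B \<subseteq> V \<and> P B > \<delta>}"
          then have D: "D \<subseteq> V" "\<delta> < P D" by auto
          then have "\<delta> < P' (Wf D \<inter> K)" unfolding P_def by simp
          moreover have "(Wf D \<inter> K) \<inter> V = D" using Wf[OF D(1)] VK by blast
          moreover have "Wf D \<inter> K \<subseteq> K" by blast
          ultimately show "D \<in> (\<lambda>E. E \<inter> V) ` {B. B \<subseteq> K \<and> P' B > \<delta>}"
            by (intro image_eqI[of _ _ "Wf D \<inter> K"]) auto
        qed
        then have "finite {B. B \<subseteq> V \<and> P B > \<delta>}" by (rule finite_surj[OF d(3)])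
        then show "\<delta> \<in> \<Delta>V" using d unfolding \<Delta>V_def by auto
      qed
      have ne: "\<Delta>K \<noteq> {}"
      proof -
        have "\<not> (B \<subseteq> K \<and> P' B > 1)" for B
        proof
          assume "B \<subseteq> K \<and> P' B > 1"
          then show False using P'b[of B] by linarith
        qed
        then have "{B. B \<subseteq> K \<and> P' B > 1} = {}" by blast
        then have "1 \<in> \<Delta>K" unfolding \<Delta>K_def by (simp only: mem_Collect_eq finite.emptyI) simp
        then show ?thesis by blast
      qed
      have bV: "bdd_below \<Delta>V" by (rule bddB) (simp add: \<Delta>V_def)
      have "Inf \<Delta>V \<le> Inf \<Delta>K" by (rule cInf_superset_mono[OF ne bV sub])
      moreover have "\<Delta>V \<noteq> {}" using ne sub by blast
      ultimately have "infI \<Delta>V \<le> infI \<Delta>K" using ne unfolding infI_def by simp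
      moreover have "FF K P' = 1 - infI \<Delta>K" unfolding FF_def \<Delta>K_def by simp
      moreover have "FF V P = 1 - infI \<Delta>V" unfolding FF_def \<Delta>V_def by simp
      ultimately show ?thesis by linarith
    qed
    have "u \<le> max 0 (Kcov P V + FF V P - 1)" unfolding u using KK FFle by simp
    also have "\<dots> \<le> Sd V R" by (rule Sd_ge[OF fP PR])
    finally show "u \<le> Sd V R" .
  qed (use Sd_bounds in blast)
  then show ?thesis using gK Km unfolding m_def k_def i_def by linarith
qed

lemma CL:
  assumes FT: "fuzzifying_topology \<tau>" and VK: "V \<subseteq> K" and c0: "0 \<le> c" and c1: "c \<le> 1"
    and wit: "\<And>y. y \<in> K - V \<Longrightarrow> \<exists>Z. y \<in> Z \<and> Z \<inter> V = {} \<and> c \<le> preopen \<tau> Z"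
  shows "GammaP \<tau> K + c - 1 \<le> GammaP \<tau> V"
  unfolding GammaP_def[of \<tau> V] cd_eq
proof (rule infI_greatest)
  let ?\<rho>V = "preopen_rel \<tau> V"
  have gb: "0 \<le> GammaP \<tau> K \<and> GammaP \<tau> K \<le> 1" by (rule Gamma_bounds[OF FT])
  then show "GammaP \<tau> K + c - 1 \<le> 1" using c1 by linarith
  fix u assume "u \<in> {trm V ?\<rho>V R | R. fuzzy_family V R}"
  then obtain R where fR: "fuzzy_family V R" and u: "u = trm V ?\<rho>V R" by blast
  define k where "k = Kcov R V"
  define i where "i = incl_deg V R ?\<rho>V"
  have kb: "0 \<le> k \<and> k \<le> 1" unfolding k_def by (rule Kcov_bounds[OF fR])
  have ib: "0 \<le> i \<and> i \<le> 1" unfolding i_def using incl_bounds[of V R ?\<rho>V] fR preopen_rel_bounds[OF FT] by blast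
  have sb: "0 \<le> Sd V R" using Sd_bounds by blast
  have "GammaP \<tau> K + c - 1 \<le> (1 - max 0 (k + i - 1) + Sd V R) + e" if e: "0 < e" for e
  proof -
    have key: "GammaP \<tau> K + min c (k + i - 1 - 2*(e/2)) - 1 \<le> Sd V R"
      unfolding k_def i_def by (rule CL_key[OF FT VK c0 c1 wit fR]) (use e in auto)
    show ?thesis
    proof (cases "k + i - 1 \<le> 0")
      case True then show ?thesis using gb c1 sb e by (simp add: max_def)
    next
      case False
      then have "max 0 (k + i - 1) = k + i - 1" by simp
      then show ?thesis using key kb ib e gb c1 by (auto simp: min_def split: if_splits)
    qed
  qed
  then have "GammaP \<tau> K + c - 1 \<le> 1 - max 0 (k + i - 1) + Sd V R" by (rule field_le_epsilon)
  then show "GammaP \<tau> K + c - 1 \<le> u" unfolding u trm_def k_def i_def using gb c1 by simp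
qed




lemma LPC_elem_bounds: assumes FT: "fuzzifying_topology \<tau>"
  shows "0 \<le> max 0 (pnbhd \<tau> x B + GammaP \<tau> B - 1) \<and> max 0 (pnbhd \<tau> x B + GammaP \<tau> B - 1) \<le> 1"
  using pnbhd_bounds[OF FT, of x B] Gamma_bounds[OF FT, of B] by auto

lemma LPC_f_bounds: assumes FT: "fuzzifying_topology \<tau>"
  shows "0 \<le> supI {max 0 (pnbhd \<tau> x B + GammaP \<tau> B - 1) | B. True} \<and>
         supI {max 0 (pnbhd \<tau> x B + GammaP \<tau> B - 1) | B. True} \<le> 1"
proof (rule supI_unit)
  fix u assume "u \<in> {max 0 (pnbhd \<tau> x B + GammaP \<tau> B - 1) | B. True}"
  then obtain B where "u = max 0 (pnbhd \<tau> x B + GammaP \<tau> B - 1)" by blast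
  then show "0 \<le> u \<and> u \<le> 1" using LPC_elem_bounds[OF FT, of x B] by simp
qed

lemma LPC_bounds: assumes FT: "fuzzifying_topology \<tau>" shows "0 \<le> LPC \<tau> \<and> LPC \<tau> \<le> 1"
  unfolding LPC_def
proof (rule infI_unit)
  fix u assume "u \<in> range (\<lambda>x. supI {max 0 (pnbhd \<tau> x B + GammaP \<tau> B - 1) | B. True})"
  then obtain x where "u = supI {max 0 (pnbhd \<tau> x B + GammaP \<tau> B - 1) | B. True}" by blast
  then show "0 \<le> u \<and> u \<le> 1" using LPC_f_bounds[OF FT, of x] by simp
qed

lemma LPC_le: assumes FT: "fuzzifying_topology \<tau>"
  shows "LPC \<tau> \<le> supI {max 0 (pnbhd \<tau> x B + GammaP \<tau> B - 1) | B. True}"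
  unfolding LPC_def
proof (rule infI_lower)
  show "supI {max 0 (pnbhd \<tau> x B + GammaP \<tau> B - 1) | B. True} \<in> range (\<lambda>x. supI {max 0 (pnbhd \<tau> x B + GammaP \<tau> B - 1) | B. True})" by blast
  show "bdd_below (range (\<lambda>x. supI {max 0 (pnbhd \<tau> x B + GammaP \<tau> B - 1) | B. True}))"
  proof (rule bddB)
    fix u assume "u \<in> range (\<lambda>x. supI {max 0 (pnbhd \<tau> x B + GammaP \<tau> B - 1) | B. True})"
    then obtain y where "u = supI {max 0 (pnbhd \<tau> y B + GammaP \<tau> B - 1) | B. True}" by blast
    then show "0 \<le> u" using LPC_f_bounds[OF FT, of y] by simp
  qed
qed

lemma MAIN:
  assumes FT: "fuzzifying_topology \<tau>"
    and H: "\<forall>A B. preopen \<tau> (A \<inter> B) \<ge> min (preopen \<tau> A) (preopen \<tau> B)"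
    and e0: "0 < e" and ea: "10 * e < T2P \<tau> + 2 * LPC \<tau> + pnbhd \<tau> x U - 3"
  shows "\<exists>V. T2P \<tau> + 2 * LPC \<tau> + pnbhd \<tau> x U - 3 - 2 * e \<le>
     min (pnbhd \<tau> x V) (min (infI ((\<lambda>y. pnbhd \<tau> y (- V)) ` (- U))) (GammaP \<tau> V))"
proof -
  define t where "t = T2P \<tau>"
  define l where "l = LPC \<tau>"
  define n where "n = pnbhd \<tau> x U"
  define a where "a = t + 2 * l + n - 3"
  have tb: "0 \<le> t \<and> t \<le> 1" unfolding t_def by (rule T2P_bounds[OF FT])
  have lb: "0 \<le> l \<and> l \<le> 1" unfolding l_def by (rule LPC_bounds[OF FT])
  have nb: "0 \<le> n \<and> n \<le> 1" unfolding n_def by (rule pnbhd_bounds[OF FT])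
  have ea': "10 * e < a" using ea unfolding a_def t_def l_def n_def by simp
  have at: "a \<le> t" "a \<le> l" "a \<le> n" using tb lb nb unfolding a_def by linarith+
  let ?S = "{max 0 (pnbhd \<tau> x B + GammaP \<tau> B - 1) | B. True}"
  have bS: "bdd_above ?S"
  proof (rule bddA)
    fix u assume "u \<in> ?S"
    then obtain B where "u = max 0 (pnbhd \<tau> x B + GammaP \<tau> B - 1)" by blast
    then show "u \<le> 1" using LPC_elem_bounds[OF FT, of x B] by simp
  qed
  have "l - e < supI ?S" using LPC_le[OF FT, of x] e0 unfolding l_def by linarith
  from supI_gt[OF bS this] obtain u where "u \<in> ?S" "l - e < u" using at e0 ea' by force
  then obtain B0 where B0: "l - e < max 0 (pnbhd \<tau> x B0 + GammaP \<tau> B0 - 1)" by blast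
  define m where "m = pnbhd \<tau> x B0"
  define g where "g = GammaP \<tau> B0"
  have mb: "0 \<le> m \<and> m \<le> 1" unfolding m_def by (rule pnbhd_bounds[OF FT])
  have gb: "0 \<le> g \<and> g \<le> 1" unfolding g_def by (rule Gamma_bounds[OF FT])
  have mg: "l - e < m + g - 1" using B0 at e0 ea' unfolding m_def g_def by (simp add: max_def split: if_splits)
  have ml: "l - e < m" "l - e < g" using mg mb gb by linarith+
  obtain W0 where W0: "x \<in> W0" "W0 \<subseteq> B0" "l - e < preopen \<tau> W0"
    using pnbhd_gt[OF FT, of "l - e" x B0] ml at e0 ea' unfolding m_def by auto
  obtain U0 where U0: "x \<in> U0" "U0 \<subseteq> U" "n - e < preopen \<tau> U0"
    using pnbhd_gt[OF FT, of "n - e" x U] at e0 ea' unfolding n_def by auto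
  define W where "W = W0 \<inter> U0"
  define cW where "cW = min (l - e) (n - e)"
  have cWb: "0 \<le> cW" "cW \<le> 1" "a - e \<le> cW" "cW \<le> l - e" "cW \<le> n - e"
    using at e0 ea' lb unfolding cW_def by auto
  have pW: "cW \<le> preopen \<tau> W" unfolding W_def
    using H[rule_format, of W0 U0] W0(3) U0(3) unfolding cW_def by linarith
  have xW: "x \<in> W" "W \<subseteq> B0" "W \<subseteq> U" using W0 U0 unfolding W_def by auto
  define C where "C = B0 - W"
  have GC: "g + cW - 1 \<le> GammaP \<tau> C" unfolding g_def
  proof (rule CL[OF FT _ cWb(1,2)])
    show "C \<subseteq> B0" unfolding C_def by blast
    fix y assume "y \<in> B0 - C"
    then show "\<exists>Z. y \<in> Z \<and> Z \<inter> C = {} \<and> cW \<le> preopen \<tau> Z" using pW unfolding C_def by blast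
  qed
  have tl2: "t + 2 * l - 2 \<ge> a" "t + l + n - 2 \<ge> a" "t + l - 1 \<ge> a" using lb nb unfolding a_def by linarith+
  have "1 < (t - e) + GammaP \<tau> C"
  proof -
    have "t - e + (g + cW - 1) > 1"
    proof (cases "l - e \<le> n - e")
      case True then have "cW = l - e" unfolding cW_def by simp
      then show ?thesis using ml tl2 ea' e0 by linarith
    next
      case False then have "cW = n - e" unfolding cW_def by simp
      then show ?thesis using ml tl2 ea' e0 by linarith
    qed
    then show ?thesis using GC by linarith
  qed
  then obtain P Q where PQ: "x \<in> P" "C \<subseteq> Q" "P \<inter> Q = {}" "t - e \<le> preopen \<tau> P" "t - e \<le> preopen \<tau> Q"
    using SEP[OF FT H, of x C "t - e"] xW(1) at e0 ea' unfolding C_def t_def by auto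
  define V where "V = B0 - Q"
  have VU: "V \<subseteq> W" using PQ(2) unfolding V_def C_def by blast
  have NV: "min (t - e) cW \<le> pnbhd \<tau> x V"
  proof -
    have "min (t - e) cW \<le> preopen \<tau> (P \<inter> W)" using H[rule_format, of P W] PQ(4) pW by linarith
    also have "\<dots> \<le> pnbhd \<tau> x V"
      by (rule pnbhd_ge[OF FT]) (use PQ xW in \<open>auto simp: V_def\<close>)
    finally show ?thesis .
  qed
  have GV: "g + (t - e) - 1 \<le> GammaP \<tau> V" unfolding g_def
  proof (rule CL[OF FT])
    show "V \<subseteq> B0" unfolding V_def by blast
    show "0 \<le> t - e" "t - e \<le> 1" using at e0 ea' tb by linarith+
    fix y assume "y \<in> B0 - V"
    then show "\<exists>Z. y \<in> Z \<and> Z \<inter> V = {} \<and> t - e \<le> preopen \<tau> Z" using PQ(5) unfolding V_def by blast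
  qed
  have IV: "t - e \<le> infI ((\<lambda>y. pnbhd \<tau> y (- V)) ` (- U))"
  proof (rule infI_greatest)
    show "t - e \<le> 1" using tb e0 by linarith
    fix v assume "v \<in> (\<lambda>y. pnbhd \<tau> y (- V)) ` (- U)"
    then obtain y where y: "y \<notin> U" "v = pnbhd \<tau> y (- V)" by blast
    show "t - e \<le> v"
    proof (cases "y \<in> B0")
      case True
      then have "y \<in> Q" using y(1) xW(3) PQ(2) unfolding C_def by blast
      then have "preopen \<tau> Q \<le> pnbhd \<tau> y (- V)" by (intro pnbhd_ge[OF FT]) (auto simp: V_def)
      then show ?thesis using PQ(5) y(2) by linarith
    next
      case False
      have "1 < (t - e) + GammaP \<tau> B0" using ml tl2 ea' e0 unfolding g_def by linarith
      then obtain P' Q' where P'Q': "y \<in> P'" "B0 \<subseteq> Q'" "P' \<inter> Q' = {}" "t - e \<le> preopen \<tau> P'"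
        using SEP[OF FT H, of y B0 "t - e"] False at e0 ea' unfolding t_def by auto
      have "preopen \<tau> P' \<le> pnbhd \<tau> y (- V)" by (rule pnbhd_ge[OF FT]) (use P'Q' in \<open>auto simp: V_def\<close>)
      then show ?thesis using P'Q'(4) y(2) by linarith
    qed
  qed
  have "a - 2 * e \<le> min (pnbhd \<tau> x V) (min (infI ((\<lambda>y. pnbhd \<tau> y (- V)) ` (- U))) (GammaP \<tau> V))"
  proof -
    have "a - 2 * e \<le> min (t - e) cW" using at cWb e0 by simp
    moreover have "a - 2 * e \<le> t - e" using at e0 by linarith
    moreover have "a - 2 * e \<le> g + (t - e) - 1" using ml tl2 by linarith
    ultimately show ?thesis using NV IV GV by linarith
  qed
  then show ?thesis unfolding a_def t_def l_def n_def by blast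
qed




theorem theorem4p3:
  fixes \<tau> :: "'a set \<Rightarrow> real"
  assumes "fuzzifying_topology \<tau>"
    and "\<forall>A B. preopen \<tau> (A \<inter> B) \<ge> min (preopen \<tau> A) (preopen \<tau> B)"
  shows "\<forall>x U. max 0 (T2P \<tau> + 2 * LPC \<tau> - 2) \<le>
           min 1 (1 - pnbhd \<tau> x U +
             supI {min (pnbhd \<tau> x V) (min (infI ((\<lambda>y. pnbhd \<tau> y (- V)) ` (- U))) (GammaP \<tau> V))
                   | V. True})"
proof (intro allI)
  fix x U
  note FT = assms(1) and H = assms(2)
  define f where "f = (\<lambda>V. min (pnbhd \<tau> x V) (min (infI ((\<lambda>y. pnbhd \<tau> y (- V)) ` (- U))) (GammaP \<tau> V)))"
  define SS where "SS = {f V | V. True}"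
  define a where "a = T2P \<tau> + 2 * LPC \<tau> + pnbhd \<tau> x U - 3"
  have tb: "0 \<le> T2P \<tau> \<and> T2P \<tau> \<le> 1" by (rule T2P_bounds[OF FT])
  have lb: "0 \<le> LPC \<tau> \<and> LPC \<tau> \<le> 1" by (rule LPC_bounds[OF FT])
  have nb: "0 \<le> pnbhd \<tau> x U \<and> pnbhd \<tau> x U \<le> 1" by (rule pnbhd_bounds[OF FT])
  have fb: "0 \<le> f V \<and> f V \<le> 1" for V
  proof -
    have "0 \<le> infI ((\<lambda>y. pnbhd \<tau> y (- V)) ` (- U)) \<and> infI ((\<lambda>y. pnbhd \<tau> y (- V)) ` (- U)) \<le> 1"
      by (rule infI_unit) (use pnbhd_bounds[OF FT] in blast)
    then show ?thesis unfolding f_def using pnbhd_bounds[OF FT, of x V] Gamma_bounds[OF FT, of V] by auto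
  qed
  have bS: "bdd_above SS" by (rule bddA) (use fb in \<open>auto simp: SS_def\<close>)
  have fle: "f V \<le> supI SS" for V by (rule supI_upper[OF _ bS]) (auto simp: SS_def)
  have S0: "0 \<le> supI SS" using fle[of UNIV] fb[of UNIV] by linarith
  have aS: "a \<le> supI SS"
  proof (cases "a \<le> 0")
    case True then show ?thesis using S0 by linarith
  next
    case False
    show ?thesis
    proof (rule field_le_epsilon)
      fix e :: real assume e: "0 < e"
      define e' where "e' = min (e/2) (a/20)"
      have e': "0 < e'" "10 * e' < a" "2 * e' \<le> e" using e False unfolding e'_def by auto
      obtain V where "a - 2 * e' \<le> f V"
        using MAIN[OF FT H e'(1), of x U] e'(2) unfolding a_def f_def by auto
      then show "a \<le> supI SS + e" using fle[of V] e'(3) by linarith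
    qed
  qed
  have "SS = {min (pnbhd \<tau> x V) (min (infI ((\<lambda>y. pnbhd \<tau> y (- V)) ` (- U))) (GammaP \<tau> V)) | V. True}"
    unfolding SS_def f_def by simp
  moreover have "max 0 (T2P \<tau> + 2 * LPC \<tau> - 2) \<le> min 1 (1 - pnbhd \<tau> x U + supI SS)"
    using aS S0 tb lb nb unfolding a_def by auto
  ultimately show "max 0 (T2P \<tau> + 2 * LPC \<tau> - 2) \<le>
           min 1 (1 - pnbhd \<tau> x U +
             supI {min (pnbhd \<tau> x V) (min (infI ((\<lambda>y. pnbhd \<tau> y (- V)) ` (- U))) (GammaP \<tau> V))
                   | V. True})" by simp
qed


end
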